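(* If $\mathbf{X}$ satisfies (A1), then for every $j\ge1$, $$W_j\le\lambda^{\max}\Big(M^{abs}_{T_j,\,T_{j+1}-1}+|U_{T_j}|\Big)\,I\{T_j<\infty\}\quad\text{a.e.},$$ where $T_{j+1}-1$ is interpreted as $\infty$ when $T_{j+1}=\infty$.
   Context: $\mathbf{X}=\{X_n\}_{n\ge0}$ is a real-valued integrable process adapted to a filtration $\{\mathcal{F}_n\}_{n\ge0}$; $\epsilon_n=X_n-E[X_n\mid\mathcal{F}_{n-1}]$, $n\ge1$; $U_n=E[X_n\mid\mathcal{F}_{n-1}]\,I\{X_{n-1}=0\}$. Events: $D^+_n=\{X_n>0\}$, $D^-_n=\{X_n<0\}$, $D^0_n=\{X_n=0\}$, and for $n\ge1$, $D_n=D^+_n(D^+_{n-1})^c\cup D^-_n(D^-_{n-1})^c\cup D^0_n(D^0_{n-1})^c$. For $j\ge1$, $T_j=\inf\{t\ge1:\sum_{i=1}^tI\{D_i\}\ge j\}$ ($\inf\emptyset=\infty$). $W_j=\sup_{T_j\le i<T_{j+1}}|X_i|$ if $T_j<\infty$ and $W_j=0$ if $T_j=\infty$. $M^{abs}_{s,t}=\sum_{i=s}^t|\epsilon_i|$ (allowing $t=\infty$, with value possibly $+\infty$). (A1) There are constants $\alpha_n\ge0$ with $\sum_n\alpha_n<\infty$ such that a.e., for all $n\ge1$: $0\le \frac{E[X_n\mid\mathcal{F}_{n-1}]}{X_{n-1}}I\{X_{n-1}\ne0\}\le 1+\alpha_n$. $\lambda^k_t=\prod_{i=t-k+1}^t(1+\alpha_i)$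 for $t,k\ge1$, $\lambda^0_t=1$, and $\lambda^{\max}=\sup_{t,k}\lambda^k_t$ (finite under (A1)). *)

theory Defs
  imports "HOL-Probability.Probability"
begin

definition cE :: "'a measure \<Rightarrow> (nat \<Rightarrow> 'a measure) \<Rightarrow> (nat \<Rightarrow> 'a \<Rightarrow> real) \<Rightarrow> nat \<Rightarrow> 'a \<Rightarrow> real" where
  "cE M F X n = real_cond_exp M (F (n - 1)) (X n)"

definition eps :: "'a measure \<Rightarrow> (nat \<Rightarrow> 'a measure) \<Rightarrow> (nat \<Rightarrow> 'a \<Rightarrow> real) \<Rightarrow> nat \<Rightarrow> 'a \<Rightarrow> real" where
  "eps M F X n \<omega> = X n \<omega> - cE M F X n \<omega>"

definition UU :: "'a measure \<Rightarrow> (nat \<Rightarrow> 'a measure) \<Rightarrow> (nat \<Rightarrow> 'a \<Rightarrow> real) \<Rightarrow> nat \<Rightarrow> 'a \<Rightarrow> real" where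
  "UU M F X n \<omega> = cE M F X n \<omega> * (if X (n - 1) \<omega> = 0 then 1 else 0)"

definition DD :: "(nat \<Rightarrow> 'a \<Rightarrow> real) \<Rightarrow> nat \<Rightarrow> 'a \<Rightarrow> bool" where
  "DD X n \<omega> =
     ((X n \<omega> > 0 \<and> \<not> X (n - 1) \<omega> > 0) \<or>
      (X n \<omega> < 0 \<and> \<not> X (n - 1) \<omega> < 0) \<or>
      (X n \<omega> = 0 \<and> \<not> X (n - 1) \<omega> = 0))"

definition cntD :: "(nat \<Rightarrow> 'a \<Rightarrow> real) \<Rightarrow> nat \<Rightarrow> 'a \<Rightarrow> nat" where
  "cntD X t \<omega> = card {i \<in> {1..t}. DD X i \<omega>}"

definition TT :: "(nat \<Rightarrow> 'a \<Rightarrow> real) \<Rightarrow> nat \<Rightarrow> 'a \<Rightarrow> enat" where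
  "TT X j \<omega> = (if \<exists>t\<ge>1. cntD X t \<omega> \<ge> j
               then enat (LEAST t. t \<ge> 1 \<and> cntD X t \<omega> \<ge> j) else \<infinity>)"

definition WW :: "(nat \<Rightarrow> 'a \<Rightarrow> real) \<Rightarrow> nat \<Rightarrow> 'a \<Rightarrow> ennreal" where
  "WW X j \<omega> = (if TT X j \<omega> < \<infinity>
      then (SUP i\<in>{i. TT X j \<omega> \<le> enat i \<and> enat i < TT X (Suc j) \<omega>}. ennreal \<bar>X i \<omega>\<bar>)
      else 0)"

definition Mabs :: "(nat \<Rightarrow> 'a \<Rightarrow> real) \<Rightarrow> nat \<Rightarrow> enat \<Rightarrow> 'a \<Rightarrow> ennreal" where
  "Mabs e s t \<omega> = (\<Sum>i. if s \<le> i \<and> enat i \<le> t then ennreal \<bar>e i \<omega>\<bar> else 0)"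

definition lam :: "(nat \<Rightarrow> real) \<Rightarrow> nat \<Rightarrow> nat \<Rightarrow> real" where
  "lam \<alpha> k t = (\<Prod>i\<in>{t + 1 - k..t}. 1 + \<alpha> i)"

definition lam_max :: "(nat \<Rightarrow> real) \<Rightarrow> ennreal" where
  "lam_max \<alpha> = (SUP p\<in>{(k, t). k \<le> t}. ennreal (lam \<alpha> (fst p) (snd p)))"

definition A1 :: "'a measure \<Rightarrow> (nat \<Rightarrow> 'a measure) \<Rightarrow> (nat \<Rightarrow> 'a \<Rightarrow> real) \<Rightarrow> (nat \<Rightarrow> real) \<Rightarrow> bool" where
  "A1 M F X \<alpha> \<longleftrightarrow> (\<forall>n. \<alpha> n \<ge> 0) \<and> summable \<alpha> \<and>
     (AE \<omega> in M. \<forall>n\<ge>1.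
        0 \<le> cE M F X n \<omega> / X (n - 1) \<omega> * (if X (n - 1) \<omega> \<noteq> 0 then 1 else 0) \<and>
        cE M F X n \<omega> / X (n - 1) \<omega> * (if X (n - 1) \<omega> \<noteq> 0 then 1 else 0) \<le> 1 + \<alpha> n)"

end

theory Submission
  imports Defs
begin

lemma growth:
  fixes x e a :: "nat \<Rightarrow> real" and u :: real
  assumes "s \<le> i"
    and "\<forall>k. s < k \<and> k \<le> i \<longrightarrow> \<bar>x k\<bar> \<le> (1 + a k) * \<bar>x (k - 1)\<bar> + \<bar>e k\<bar>"
    and "\<bar>x s\<bar> \<le> u + \<bar>e s\<bar>" and "\<forall>k. a k \<ge> 0" and "u \<ge> 0"
  shows "\<bar>x i\<bar> \<le> (\<Prod>k\<in>{s+1..i}. 1 + a k) * ((\<Sum>k\<in>{s..i}. \<bar>e k\<bar>) + u)"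
  using assms(1,2)
proof (induction i rule: dec_induct)
  case base
  then show ?case using assms(3) by simp
next
  case (step i)
  define P where "P = (\<Prod>k\<in>{s+1..i}. 1 + a k)"
  define S where "S = (\<Sum>k\<in>{s..i}. \<bar>e k\<bar>) + u"
  have P1: "P \<ge> 1" unfolding P_def using assms(4) by (intro prod_ge_1) auto
  have S0: "S \<ge> 0" unfolding S_def using assms(5) by (simp add: sum_nonneg)
  have pr: "\<forall>k. s < k \<and> k \<le> i \<longrightarrow> \<bar>x k\<bar> \<le> (1 + a k) * \<bar>x (k - 1)\<bar> + \<bar>e k\<bar>"
    using step.prems by auto
  have IH: "\<bar>x i\<bar> \<le> P * S" using step.IH[OF pr] P_def S_def by auto
  have st: "\<bar>x (Suc i)\<bar> \<le> (1 + a (Suc i)) * \<bar>x i\<bar> + \<bar>e (Suc i)\<bar>"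
    using step.prems step.hyps by (metis diff_Suc_1 le_imp_less_Suc order_refl)
  have a0: "1 + a (Suc i) \<ge> 1" using assms(4) by simp
  have "(1 + a (Suc i)) * \<bar>x i\<bar> \<le> (1 + a (Suc i)) * (P * S)"
    using IH a0 by (intro mult_left_mono) auto
  moreover have "\<bar>e (Suc i)\<bar> \<le> (1 + a (Suc i)) * P * \<bar>e (Suc i)\<bar>"
  proof -
    have "1 \<le> (1 + a (Suc i)) * P" using a0 P1
      by (metis mult_mono' mult.right_neutral zero_le_one order_trans)
    from mult_right_mono[OF this abs_ge_zero[of "e (Suc i)"]] show ?thesis by simp
  qed
  ultimately have "\<bar>x (Suc i)\<bar> \<le> (1 + a (Suc i)) * P * (S + \<bar>e (Suc i)\<bar>)"
    using st by (simp add: algebra_simps)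
  moreover have "(\<Prod>k\<in>{s+1..Suc i}. 1 + a k) = (1 + a (Suc i)) * P"
    unfolding P_def using step(1) by (subst prod.nat_ivl_Suc') auto
  moreover have "(\<Sum>k\<in>{s..Suc i}. \<bar>e k\<bar>) + u = S + \<bar>e (Suc i)\<bar>"
    unfolding S_def using step(1) by (subst sum.nat_ivl_Suc') auto
  ultimately show ?case by simp
qed

lemma cntD_0: "cntD X 0 \<omega> = 0"
  unfolding cntD_def by simp

lemma cntD_Suc: "cntD X (Suc t) \<omega> = cntD X t \<omega> + (if DD X (Suc t) \<omega> then 1 else 0)"
proof -
  have "{i \<in> {1..Suc t}. DD X i \<omega>} = {i \<in> {1..t}. DD X i \<omega>} \<union> (if DD X (Suc t) \<omega> then {Suc t} else {})"
    by (auto simp: le_Suc_eq)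
  then show ?thesis unfolding cntD_def by (auto simp: card_insert_if)
qed

lemma cntD_mono: "t \<le> t' \<Longrightarrow> cntD X t \<omega> \<le> cntD X t' \<omega>"
  unfolding cntD_def by (intro card_mono) auto

lemma TT_props:
  assumes "TT X j \<omega> = enat s" "j \<ge> 1"
  shows "s \<ge> 1" "DD X s \<omega>" "cntD X s \<omega> \<ge> j"
    "\<And>i. s < i \<Longrightarrow> enat i < TT X (Suc j) \<omega> \<Longrightarrow> \<not> DD X i \<omega>"
proof -
  have ex: "\<exists>t\<ge>1. cntD X t \<omega> \<ge> j" using assms(1) unfolding TT_def by (auto split: if_splits)
  then have sdef: "s = (LEAST t. t \<ge> 1 \<and> cntD X t \<omega> \<ge> j)" using assms(1) unfolding TT_def by auto
  have L: "s \<ge> 1 \<and> cntD X s \<omega> \<ge> j" unfolding sdef using ex by (metis (mono_tags, lifting) LeastI)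
  then show "s \<ge> 1" "cntD X s \<omega> \<ge> j" by auto
  have lt: "cntD X (s - 1) \<omega> < j"
  proof (cases "s - 1 = 0")
    case True then show ?thesis using cntD_0[of X \<omega>] assms(2) by simp
  next
    case False
    show ?thesis
    proof (rule ccontr)
      assume "\<not> ?thesis"
      then have "(LEAST t. t \<ge> 1 \<and> cntD X t \<omega> \<ge> j) \<le> s - 1" using False
        by (intro Least_le) auto
      then have "s \<le> s - 1" using sdef by simp
      moreover have "s \<ge> 1" using L by simp
      ultimately show False by arith
    qed
  qed
  have "cntD X s \<omega> = cntD X (s - 1) \<omega> + (if DD X s \<omega> then 1 else 0)"
    using cntD_Suc[of X "s - 1" \<omega>] L by simp
  then show "DD X s \<omega>" using lt L by (auto split: if_splits)
  fix i assume si: "s < i" and iT: "enat i < TT X (Suc j) \<omega>"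
  show "\<not> DD X i \<omega>"
  proof
    assume D: "DD X i \<omega>"
    have "cntD X i \<omega> = cntD X (i - 1) \<omega> + 1"
      using cntD_Suc[of X "i - 1" \<omega>] si D by simp
    moreover have "cntD X (i - 1) \<omega> \<ge> cntD X s \<omega>" using si by (intro cntD_mono) auto
    ultimately have ci: "cntD X i \<omega> \<ge> Suc j" using L by simp
    then have ex2: "\<exists>t\<ge>1. cntD X t \<omega> \<ge> Suc j" using si by (intro exI[of _ i]) auto
    have "(LEAST t. t \<ge> 1 \<and> cntD X t \<omega> \<ge> Suc j) \<le> i" using ci si by (intro Least_le) auto
    then have "TT X (Suc j) \<omega> \<le> enat i" unfolding TT_def using ex2 by simp
    with iT show False by simp
  qed
qed

lemma enat_lt_minus1: "enat i < T \<Longrightarrow> k \<le> i \<Longrightarrow> enat k \<le> T - 1"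
  by (cases T) (auto simp: enat_1[symmetric])

lemma pointwise:
  assumes a0: "\<forall>n. \<alpha> n \<ge> 0"
    and H: "\<forall>n\<ge>1.
        0 \<le> cE M F X n \<omega> / X (n - 1) \<omega> * (if X (n - 1) \<omega> \<noteq> 0 then 1 else 0) \<and>
        cE M F X n \<omega> / X (n - 1) \<omega> * (if X (n - 1) \<omega> \<noteq> 0 then 1 else 0) \<le> 1 + \<alpha> n"
    and j1: "j \<ge> 1"
  shows "WW X j \<omega> \<le>
           (if TT X j \<omega> < \<infinity> then
              lam_max \<alpha> * (Mabs (eps M F X) (the_enat (TT X j \<omega>)) (TT X (Suc j) \<omega> - 1) \<omega>
                            + ennreal \<bar>UU M F X (the_enat (TT X j \<omega>)) \<omega>\<bar>)
            else 0)"
proof (cases "TT X j \<omega> < \<infinity>")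
  case False
  then show ?thesis unfolding WW_def by simp
next
  case True
  then obtain s where Ts: "TT X j \<omega> = enat s" by (cases "TT X j \<omega>") auto
  note TP = TT_props[OF Ts j1]
  define c where "c k = cE M F X k \<omega>" for k
  define e where "e k = eps M F X k \<omega>" for k
  define u where "u = \<bar>UU M F X s \<omega>\<bar>"
  have Xce: "X k \<omega> = c k + e k" for k unfolding c_def e_def eps_def by simp
  have key: "\<bar>c k\<bar> \<le> (1 + \<alpha> k) * \<bar>X (k - 1) \<omega>\<bar> \<and> 0 \<le> c k * X (k - 1) \<omega>"
    if k1: "k \<ge> 1" and nz: "X (k - 1) \<omega> \<noteq> 0" for k
  proof -
    define r where "r = c k / X (k - 1) \<omega>"
    have r: "0 \<le> r" "r \<le> 1 + \<alpha> k" using H k1 nz unfolding r_def c_def by auto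
    have ck: "c k = r * X (k - 1) \<omega>" unfolding r_def using nz by simp
    have "\<bar>c k\<bar> = r * \<bar>X (k - 1) \<omega>\<bar>" using ck r by (simp add: abs_mult)
    also have "\<dots> \<le> (1 + \<alpha> k) * \<bar>X (k - 1) \<omega>\<bar>" using r by (intro mult_right_mono) auto
    finally show ?thesis using ck r by (simp add: mult.assoc)
  qed
  have u0: "u \<ge> 0" unfolding u_def by simp
  have base: "\<bar>X s \<omega>\<bar> \<le> u + \<bar>e s\<bar>"
  proof (cases "X (s - 1) \<omega> = 0")
    case True
    then have "u = \<bar>c s\<bar>" unfolding u_def UU_def c_def by simp
    then show ?thesis using Xce[of s] by simp
  next
    case False
    have "u = 0" unfolding u_def UU_def using False by simp
    moreover have "0 \<le> c s * X (s - 1) \<omega>" using key[OF TP(1) False] by simp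
    moreover note D = TP(2)[unfolded DD_def]
    ultimately show ?thesis using Xce[of s] False
      by (smt (verit, best) mult_nonneg_nonneg mult_nonpos_nonpos zero_le_mult_iff)
  qed
  have "ennreal \<bar>X i \<omega>\<bar> \<le> lam_max \<alpha> * (Mabs (eps M F X) s (TT X (Suc j) \<omega> - 1) \<omega> + ennreal u)"
    if iR: "i \<in> {i. TT X j \<omega> \<le> enat i \<and> enat i < TT X (Suc j) \<omega>}" for i
  proof -
    have si: "s \<le> i" and iT: "enat i < TT X (Suc j) \<omega>" using iR Ts by auto
    have stp: "\<forall>k. s < k \<and> k \<le> i \<longrightarrow> \<bar>X k \<omega>\<bar> \<le> (1 + \<alpha> k) * \<bar>X (k - 1) \<omega>\<bar> + \<bar>e k\<bar>"
    proof (intro allI impI)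
      fix k assume k: "s < k \<and> k \<le> i"
      have nD: "\<not> DD X k \<omega>" using TP(4)[of k] k iT
        by (meson enat_ord_simps(1) le_less_trans)
      show "\<bar>X k \<omega>\<bar> \<le> (1 + \<alpha> k) * \<bar>X (k - 1) \<omega>\<bar> + \<bar>e k\<bar>"
      proof (cases "X (k - 1) \<omega> = 0")
        case True
        then have "X k \<omega> = 0" using nD unfolding DD_def by auto
        then show ?thesis using a0 by (simp add: add_nonneg_nonneg)
      next
        case False
        have "\<bar>c k\<bar> \<le> (1 + \<alpha> k) * \<bar>X (k - 1) \<omega>\<bar>" using key[OF _ False] k by auto
        then show ?thesis using Xce[of k] by linarith
      qed
    qed
    have g: "\<bar>X i \<omega>\<bar> \<le> (\<Prod>k\<in>{s+1..i}. 1 + \<alpha> k) * ((\<Sum>k\<in>{s..i}. \<bar>e k\<bar>) + u)"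
      using growth[of s i "\<lambda>k. X k \<omega>" \<alpha> e u] si stp base a0 u0 by simp
    define P where "P = (\<Prod>k\<in>{s+1..i}. 1 + \<alpha> k)"
    have P0: "P \<ge> 0" unfolding P_def using a0 by (intro prod_nonneg) (auto simp: add_nonneg_nonneg)
    have S0: "(\<Sum>k\<in>{s..i}. \<bar>e k\<bar>) + u \<ge> 0" using u0 by (simp add: sum_nonneg)
    have "ennreal \<bar>X i \<omega>\<bar> \<le> ennreal (P * ((\<Sum>k\<in>{s..i}. \<bar>e k\<bar>) + u))"
      using g P_def by (intro ennreal_leI) simp
    also have "\<dots> = ennreal P * ennreal ((\<Sum>k\<in>{s..i}. \<bar>e k\<bar>) + u)"
      using P0 S0 by (simp add: ennreal_mult)
    also have "\<dots> \<le> lam_max \<alpha> * (Mabs (eps M F X) s (TT X (Suc j) \<omega> - 1) \<omega> + ennreal u)"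
    proof (intro mult_mono)
      have "lam \<alpha> (i - s) i = P" unfolding lam_def P_def using si
        by (metis Nat.add_diff_assoc2 diff_diff_cancel diff_le_self)
      moreover have "ennreal (lam \<alpha> (fst (i - s, i)) (snd (i - s, i))) \<le> lam_max \<alpha>"
        unfolding lam_max_def by (rule SUP_upper) auto
      ultimately show "ennreal P \<le> lam_max \<alpha>" by simp
    next
      have "ennreal ((\<Sum>k\<in>{s..i}. \<bar>e k\<bar>) + u) = (\<Sum>k\<in>{s..i}. ennreal \<bar>e k\<bar>) + ennreal u"
        using u0 by (simp add: sum_nonneg)
      also have "(\<Sum>k\<in>{s..i}. ennreal \<bar>e k\<bar>)
          = (\<Sum>k\<in>{s..i}. (if s \<le> k \<and> enat k \<le> TT X (Suc j) \<omega> - 1 then ennreal \<bar>eps M F X k \<omega>\<bar> else 0))"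
        using enat_lt_minus1[OF iT] unfolding e_def by (intro sum.cong) auto
      also have "\<dots> \<le> Mabs (eps M F X) s (TT X (Suc j) \<omega> - 1) \<omega>"
        unfolding Mabs_def by (intro sum_le_suminf summableI) auto
      finally show "ennreal ((\<Sum>k\<in>{s..i}. \<bar>e k\<bar>) + u)
          \<le> Mabs (eps M F X) s (TT X (Suc j) \<omega> - 1) \<omega> + ennreal u" by (simp add: add_right_mono)
    qed auto
    finally show ?thesis .
  qed
  then have "WW X j \<omega> \<le> lam_max \<alpha> * (Mabs (eps M F X) s (TT X (Suc j) \<omega> - 1) \<omega> + ennreal u)"
    unfolding WW_def using True by (simp only: if_True) (rule SUP_least, blast)
  then show ?thesis using True Ts u_def by simp
qed

theorem lemmaA2:
  fixes M :: "'a measure" and F :: "nat \<Rightarrow> 'a measure" and X :: "nat \<Rightarrow> 'a \<Rightarrow> real"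
    and \<alpha> :: "nat \<Rightarrow> real" and j :: nat
  assumes "prob_space M"
    and "\<And>n. subalgebra M (F n)"
    and "\<And>n. sets (F n) \<subseteq> sets (F (Suc n))"
    and "\<And>n. X n \<in> borel_measurable (F n)"
    and "\<And>n. integrable M (X n)"
    and "A1 M F X \<alpha>"
    and "j \<ge> 1"
  shows "AE \<omega> in M. WW X j \<omega> \<le>
           (if TT X j \<omega> < \<infinity> then
              lam_max \<alpha> * (Mabs (eps M F X) (the_enat (TT X j \<omega>)) (TT X (Suc j) \<omega> - 1) \<omega>
                            + ennreal \<bar>UU M F X (the_enat (TT X j \<omega>)) \<omega>\<bar>)
            else 0)"
proof -
  have a0: "\<forall>n. \<alpha> n \<ge> 0" using assms(6) unfolding A1_def by simp
  from assms(6) have AE: "AE \<omega> in M. \<forall>n\<ge>1.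
        0 \<le> cE M F X n \<omega> / X (n - 1) \<omega> * (if X (n - 1) \<omega> \<noteq> 0 then 1 else 0) \<and>
        cE M F X n \<omega> / X (n - 1) \<omega> * (if X (n - 1) \<omega> \<noteq> 0 then 1 else 0) \<le> 1 + \<alpha> n"
    unfolding A1_def by simp
  show ?thesis
    using AE by (rule eventually_mono) (rule pointwise[OF a0 _ assms(7)])
qed

end
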